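(* Let $\mathbb{F}=\mathbb{F}_{FSD}$, let $x_0>0$, and assume conditions (C2), (C3), (C4) hold with least favorable measure $\mathbb{P}^*$. Let $(W_{\mathbb{P}})_{\mathbb{P}\in\mathcal{P}}$ be a law invariant family of preferences that is $\mathbb{F}_{FSD}$-family consistent on $\mathcal{Y}^{x_0}_{(W_{\mathbb{P}})_{\mathbb{P}\in\mathcal{P}}}$ with respect to $\mathbb{P}^*$, and suppose the robust problem $\max_{X\in\mathcal{Y}^{x_0}_{(W_{\mathbb{P}})_{\mathbb{P}\in\mathcal{P}}}}\inf_{\mathbb{P}\in\mathcal{P}}W_{\mathbb{P}}(X)$ has a unique solution $\tilde X$. Then $\tilde X$ is $\mathbb{P}^*$-cost-efficient.
   Context: Standing setting: fix $T>0$, $r\in\mathbb{R}$, $S_0>0$, and write $\mathbb{R}_+=[0,\infty)$. Let $S_T:\Omega\to\mathbb{R}_+$ be a random variable and $\mathcal{F}=\sigma(S_T)$. $\mathcal{P}$ is a set of mutually equivalent probability measures on $(\Omega,\mathcal{F})$, and $\mathbb{Q}$ is a probability measure on $(\Omega,\mathcal{F})$ equivalent to every $\mathbb{P}\in\mathcal{P}$. The set of payoffs is $\mathcal{X}=\{g(S_T): g:\mathbb{R}_+\to\mathbb{R}_+\text{ measurable}, E_{\mathbb{Q}}[|g(S_T)|]<\infty\}$, with price $e^{-rT}E_{\mathbb{Q}}[X]$. For $\mathbb{P}\in\mathcal{P}$, $\ell^{\mathbb{P}}=d\mathbb{P}/d\mathbb{Q}$; $F_X^{\mathbb{P}}$ is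 the cdf of $X$ under $\mathbb{P}$. For a set $\mathbb{F}$ of measurable functions $\mathbb{R}_+\to\mathbb{R}$ and cdfs $F,G$ on $\mathbb{R}_+$, $F\preceq_{\mathbb{F}}G$ means $\int f\,dF\le\int f\,dG$ for all $f\in\mathbb{F}$ with finite integrals. $\mathbb{F}_{FSD}$ is the set of all non-decreasing functions $\mathbb{R}_+\to\mathbb{R}$. Standard cost-efficiency under $\mathbb{P}$ for a cdf $F_0$: $\inf\{e^{-rT}E_{\mathbb{Q}}[X]:X\in\mathcal{X},F_X^{\mathbb{P}}=F_0\}$; $X$ is $\mathbb{P}$-cost-efficient if it solves this for $F_0=F_X^{\mathbb{P}}$. $\mathbb{F}$ is composition-consistent if $f,g\in\mathbb{F}\Rightarrow f\circ g\in\mathbb{F}$; cost-consistent if for all $X,Y\in\mathcal{X}$ and $\mathbb{P}\in\mathcal{P}$ with $X,Y$ both $\mathbb{P}$-cost-efficient, $F_X^{\mathbb{P}}\preceq_{\mathbb{F}}F_Y^{\mathbb{P}}$ implies $E_{\mathbb{Q}}[X]\le E_{\mathbb{Q}}[Y]$, strictly if also $F_X^{\mathbb{P}}\ne F_Y^{\mathbb{P}}$. Least favorable measure: $\mathbb{P}^*\in\mathcal{P}$ with $\ell^*=d\mathbb{P}^*/d\mathbb{Q}$ such that $F_{\ell^*}^{\mathbb{P}^*}\preceq_{\mathbb{F}}F_{\ell^*}^{\mathbb{P}}$ for all $\mathbb{P}\in\mathcal{P}$. (C2) $\mathbb{F}$ composition- and cost-consistent; (C3) $\mathcal{P}$ contains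 a least favorable measure $\mathbb{P}^*$ w.r.t. $\mathbb{F}$; (C4) $x\mapsto F^{\mathbb{P}^*}_{\ell^*}(x)$ is continuous and $1/\ell^*$ has finite variance under $\mathbb{P}^*$. Preferences: a preference is a functional $W:\mathcal{X}\to\mathbb{R}$; $W_{\mathbb{P}}$ is $\mathbb{P}$-law invariant if $F_X^{\mathbb{P}}=F_Y^{\mathbb{P}}$ implies $W_{\mathbb{P}}(X)=W_{\mathbb{P}}(Y)$, and a family is law invariant if each member is. For $\mathcal{Y}\subset\mathcal{X}$, $(W_{\mathbb{P}})_{\mathbb{P}\in\mathcal{P}}$ is $\mathbb{F}$-family consistent on $\mathcal{Y}$ w.r.t. $\mathbb{P}^*$ if for every $Y\in\mathcal{Y}$, $F_Y^{\mathbb{P}^*}\preceq_{\mathbb{F}}F_Y^{\mathbb{P}}$ for all $\mathbb{P}$ implies $W_{\mathbb{P}^*}(Y)\le W_{\mathbb{P}}(Y)$ for all $\mathbb{P}$. For $x_0>0$: $\mathcal{Y}^{x_0}_{W_{\mathbb{P}}}=\{X\in\mathcal{X}:W_{\mathbb{P}}(X)\in\mathbb{R},\ e^{-rT}E_{\mathbb{Q}}[X]\le x_0\}$ and $\mathcal{Y}^{x_0}_{(W_{\mathbb{P}})_{\mathbb{P}\in\mathcal{P}}}=\bigcap_{\mathbb{P}\in\mathcal{P}}\mathcal{Y}^{x_0}_{W_{\mathbb{P}}}$. *)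

theory Defs
  imports "HOL-Probability.Probability"
begin

definition payoff :: "'a measure \<Rightarrow> ('a \<Rightarrow> real) \<Rightarrow> ('a \<Rightarrow> real) \<Rightarrow> bool" where
  "payoff Q S X \<longleftrightarrow>
     (\<exists>g. g \<in> borel_measurable borel \<and> (\<forall>x\<ge>0. 0 \<le> g x) \<and> X = (\<lambda>\<omega>. g (S \<omega>)))
     \<and> integrable Q X"

definition price :: "real \<Rightarrow> real \<Rightarrow> 'a measure \<Rightarrow> ('a \<Rightarrow> real) \<Rightarrow> real" where
  "price r T Q X = exp (- r * T) * (\<integral>\<omega>. X \<omega> \<partial>Q)"

definition law_cdf :: "'a measure \<Rightarrow> ('a \<Rightarrow> real) \<Rightarrow> real \<Rightarrow> real" where
  "law_cdf P X = (\<lambda>x. measure P {\<omega> \<in> space P. X \<omega> \<le> x})"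

definition density_ratio :: "'a measure \<Rightarrow> 'a measure \<Rightarrow> 'a \<Rightarrow> real" where
  "density_ratio Q P = (\<lambda>\<omega>. enn2real (RN_deriv Q P \<omega>))"

definition stoch_le :: "(real \<Rightarrow> real) set \<Rightarrow> (real \<Rightarrow> real) \<Rightarrow> (real \<Rightarrow> real) \<Rightarrow> bool" where
  "stoch_le FF F G \<longleftrightarrow>
     (\<forall>f\<in>FF. integrable (interval_measure F) f \<longrightarrow> integrable (interval_measure G) f \<longrightarrow>
        (\<integral>x. f x \<partial>interval_measure F) \<le> (\<integral>x. f x \<partial>interval_measure G))"

definition F_FSD :: "(real \<Rightarrow> real) set" where
  "F_FSD = {f. mono f}"

definition cost_efficient :: "real \<Rightarrow> real \<Rightarrow> 'a measure \<Rightarrow> ('a \<Rightarrow> real) \<Rightarrow> 'a measure \<Rightarrow> ('a \<Rightarrow> real) \<Rightarrow> bool" where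
  "cost_efficient r T Q S P X \<longleftrightarrow> payoff Q S X \<and>
     (\<forall>Y. payoff Q S Y \<and> law_cdf P Y = law_cdf P X \<longrightarrow> price r T Q X \<le> price r T Q Y)"

definition composition_consistent :: "(real \<Rightarrow> real) set \<Rightarrow> bool" where
  "composition_consistent FF \<longleftrightarrow> (\<forall>f\<in>FF. \<forall>g\<in>FF. f \<circ> g \<in> FF)"

definition cost_consistent ::
  "(real \<Rightarrow> real) set \<Rightarrow> real \<Rightarrow> real \<Rightarrow> 'a measure \<Rightarrow> ('a \<Rightarrow> real) \<Rightarrow> 'a measure set \<Rightarrow> bool" where
  "cost_consistent FF r T Q S Ps \<longleftrightarrow>
     (\<forall>X Y. \<forall>P\<in>Ps. payoff Q S X \<longrightarrow> payoff Q S Y \<longrightarrow>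
        cost_efficient r T Q S P X \<longrightarrow> cost_efficient r T Q S P Y \<longrightarrow>
        stoch_le FF (law_cdf P X) (law_cdf P Y) \<longrightarrow>
        ((\<integral>\<omega>. X \<omega> \<partial>Q) \<le> (\<integral>\<omega>. Y \<omega> \<partial>Q) \<and>
         (law_cdf P X \<noteq> law_cdf P Y \<longrightarrow> (\<integral>\<omega>. X \<omega> \<partial>Q) < (\<integral>\<omega>. Y \<omega> \<partial>Q))))"

definition least_favorable ::
  "(real \<Rightarrow> real) set \<Rightarrow> 'a measure \<Rightarrow> 'a measure set \<Rightarrow> 'a measure \<Rightarrow> bool" where
  "least_favorable FF Q Ps Pst \<longleftrightarrow> Pst \<in> Ps \<and>
     (\<forall>P\<in>Ps. stoch_le FF (law_cdf Pst (density_ratio Q Pst)) (law_cdf P (density_ratio Q Pst)))"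

definition law_invariant_family ::
  "'a measure \<Rightarrow> ('a \<Rightarrow> real) \<Rightarrow> 'a measure set \<Rightarrow> ('a measure \<Rightarrow> ('a \<Rightarrow> real) \<Rightarrow> real) \<Rightarrow> bool" where
  "law_invariant_family Q S Ps W \<longleftrightarrow>
     (\<forall>P\<in>Ps. \<forall>X Y. payoff Q S X \<longrightarrow> payoff Q S Y \<longrightarrow> law_cdf P X = law_cdf P Y \<longrightarrow> W P X = W P Y)"

definition family_consistent ::
  "(real \<Rightarrow> real) set \<Rightarrow> 'a measure set \<Rightarrow> ('a measure \<Rightarrow> ('a \<Rightarrow> real) \<Rightarrow> real) \<Rightarrow>
   ('a \<Rightarrow> real) set \<Rightarrow> 'a measure \<Rightarrow> bool" where
  "family_consistent FF Ps W YY Pst \<longleftrightarrow>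
     (\<forall>Y\<in>YY. (\<forall>P\<in>Ps. stoch_le FF (law_cdf Pst Y) (law_cdf P Y)) \<longrightarrow> (\<forall>P\<in>Ps. W Pst Y \<le> W P Y))"

text \<open>\<Y>^{x0}_{W_P}; W is real valued, so the finiteness condition is automatic.\<close>
definition budget_set ::
  "real \<Rightarrow> real \<Rightarrow> 'a measure \<Rightarrow> ('a \<Rightarrow> real) \<Rightarrow> (('a \<Rightarrow> real) \<Rightarrow> real) \<Rightarrow> real \<Rightarrow> ('a \<Rightarrow> real) set" where
  "budget_set r T Q S WP x0 = {X. payoff Q S X \<and> WP X \<in> \<real> \<and> price r T Q X \<le> x0}"

definition family_budget_set ::
  "real \<Rightarrow> real \<Rightarrow> 'a measure \<Rightarrow> ('a \<Rightarrow> real) \<Rightarrow> 'a measure set \<Rightarrow>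
   ('a measure \<Rightarrow> ('a \<Rightarrow> real) \<Rightarrow> real) \<Rightarrow> real \<Rightarrow> ('a \<Rightarrow> real) set" where
  "family_budget_set r T Q S Ps W x0 = (\<Inter>P\<in>Ps. budget_set r T Q S (W P) x0)"

definition robust_value :: "'a measure set \<Rightarrow> ('a measure \<Rightarrow> ('a \<Rightarrow> real) \<Rightarrow> real) \<Rightarrow> ('a \<Rightarrow> real) \<Rightarrow> ereal" where
  "robust_value Ps W X = (INF P\<in>Ps. ereal (W P X))"

definition unique_robust_solution ::
  "'a measure \<Rightarrow> ('a \<Rightarrow> real) set \<Rightarrow> 'a measure set \<Rightarrow> ('a measure \<Rightarrow> ('a \<Rightarrow> real) \<Rightarrow> real) \<Rightarrow> ('a \<Rightarrow> real) \<Rightarrow> bool" where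
  "unique_robust_solution Q YY Ps W Xt \<longleftrightarrow> Xt \<in> YY \<and>
     (\<forall>X\<in>YY. robust_value Ps W X \<le> robust_value Ps W Xt) \<and>
     (\<forall>X\<in>YY. robust_value Ps W X = robust_value Ps W Xt \<longrightarrow> (AE \<omega> in Q. X \<omega> = Xt \<omega>))"

end

theory Submission
  imports Defs
begin


lemma factor_through:
  fixes f :: "'a \<Rightarrow> real" and S :: "'a \<Rightarrow> real"
  assumes sQ: "sets Q = sets (vimage_algebra (space Q) S borel)" and f: "f \<in> borel_measurable Q"
  shows "\<exists>\<phi> \<in> borel_measurable borel. \<forall>\<omega>\<in>space Q. f \<omega> = \<phi> (S \<omega>)"
proof -
  have sets_eq: "sets Q = {S -` A \<inter> space Q | A. A \<in> sets borel}"
  proof -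
    have "S \<in> space Q \<rightarrow> space borel" by simp
    from sets_vimage_algebra2[OF this] sQ show ?thesis by (simp only:)
  qed
  have "\<forall>r::rat. \<exists>A. A \<in> sets borel \<and> {\<omega>\<in>space Q. f \<omega> < of_rat r} = S -` A \<inter> space Q"
  proof
    fix r :: rat
    have "{\<omega>\<in>space Q. f \<omega> < of_rat r} \<in> sets Q" using f by measurable
    then show "\<exists>A. A \<in> sets borel \<and> {\<omega>\<in>space Q. f \<omega> < of_rat r} = S -` A \<inter> space Q"
      unfolding sets_eq by blast
  qed
  then obtain A where A: "\<And>r. A r \<in> sets borel" "\<And>r. {\<omega>\<in>space Q. f \<omega> < of_rat r} = S -` A r \<inter> space Q"
    by metis
  define B where "B r = (\<Union>r'\<in>{r'. r' \<le> r}. A r')" for r :: rat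
  have Bb: "B r \<in> sets borel" for r
    unfolding B_def by (rule sets.countable_UN'') (simp_all add: A)
  have Beq: "S -` B r \<inter> space Q = {\<omega>\<in>space Q. f \<omega> < of_rat r}" for r
  proof
    show "S -` B r \<inter> space Q \<subseteq> {\<omega> \<in> space Q. f \<omega> < real_of_rat r}"
    proof
      fix \<omega> assume "\<omega> \<in> S -` B r \<inter> space Q"
      then obtain r' where "r' \<le> r" "\<omega> \<in> S -` A r' \<inter> space Q" unfolding B_def by auto
      then have "f \<omega> < of_rat r'" "\<omega> \<in> space Q" using A(2)[of r'] by auto
      moreover have "real_of_rat r' \<le> real_of_rat r" using \<open>r' \<le> r\<close> by (simp add: of_rat_less_eq)
      ultimately show "\<omega> \<in> {\<omega> \<in> space Q. f \<omega> < real_of_rat r}" by simp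
    qed
    show "{\<omega> \<in> space Q. f \<omega> < real_of_rat r} \<subseteq> S -` B r \<inter> space Q"
      using A(2)[of r] unfolding B_def by auto
  qed
  define \<psi> where "\<psi> x = (INF r\<in>UNIV. (if x \<in> B r then ereal (of_rat r) else \<infinity>))" for x
  define \<phi> where "\<phi> x = real_of_ereal (\<psi> x)" for x
  have "\<psi> \<in> borel_measurable borel"
    unfolding \<psi>_def
    by (intro borel_measurable_INF) (auto intro!: measurable_If_set Bb)
  then have \<phi>m: "\<phi> \<in> borel_measurable borel" unfolding \<phi>_def by measurable
  have "\<psi> (S \<omega>) = ereal (f \<omega>)" if \<omega>: "\<omega> \<in> space Q" for \<omega>
  proof (rule antisym)
    show "\<psi> (S \<omega>) \<le> ereal (f \<omega>)"
    proof (rule ereal_le_epsilon2)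
      fix e :: real assume "0 < e"
      then obtain q :: rat where q: "f \<omega> < of_rat q" "of_rat q < f \<omega> + e"
        using of_rat_dense[of "f \<omega>" "f \<omega> + e"] by auto
      then have "S \<omega> \<in> B q" using Beq[of q] \<omega> by auto
      moreover have "\<psi> (S \<omega>) \<le> (if S \<omega> \<in> B q then ereal (of_rat q) else \<infinity>)"
        unfolding \<psi>_def by (rule INF_lower) simp
      ultimately have "\<psi> (S \<omega>) \<le> ereal (of_rat q)" by simp
      also have "\<dots> \<le> ereal (f \<omega>) + ereal e" using q by simp
      finally show "\<psi> (S \<omega>) \<le> ereal (f \<omega>) + ereal e" .
    qed
    show "ereal (f \<omega>) \<le> \<psi> (S \<omega>)"
      unfolding \<psi>_def
    proof (rule INF_greatest)
      fix r :: rat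
      show "ereal (f \<omega>) \<le> (if S \<omega> \<in> B r then ereal (of_rat r) else \<infinity>)"
      proof (cases "S \<omega> \<in> B r")
        case True
        then have "\<omega> \<in> S -` B r \<inter> space Q" using \<omega> by simp
        then have "f \<omega> < of_rat r" unfolding Beq by simp
        then show ?thesis using True by simp
      qed simp
    qed
  qed
  then have "\<forall>\<omega>\<in>space Q. f \<omega> = \<phi> (S \<omega>)" unfolding \<phi>_def by simp
  with \<phi>m show ?thesis by blast
qed



locale QP =
  fixes Q :: "'a measure" and Pst :: "'a measure"
  assumes Q: "prob_space Q" and Pst: "prob_space Pst"
    and sPst: "sets Pst = sets Q" and nQ: "null_sets Pst = null_sets Q"
begin

abbreviation "lr \<equiv> density_ratio Q Pst"

lemma ell_meas[measurable]: "lr \<in> borel_measurable Q"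
  unfolding density_ratio_def by measurable

lemma ac: "absolutely_continuous Q Pst"
  unfolding absolutely_continuous_def using nQ by simp

lemma sfQ: "sigma_finite_measure Q"
  using Q by (simp add: prob_space_imp_sigma_finite)

lemma RN_fin: "AE \<omega> in Q. RN_deriv Q Pst \<omega> \<noteq> \<infinity>"
  using sigma_finite_measure.RN_deriv_finite[OF sfQ _ ac sPst] Pst
  by (simp add: prob_space_imp_sigma_finite)

lemma RN_ell: "AE \<omega> in Q. RN_deriv Q Pst \<omega> = ennreal (lr \<omega>)"
  using RN_fin by eventually_elim (auto simp: density_ratio_def ennreal_enn2real_if)

lemma nn_Pst:
  assumes [measurable]: "f \<in> borel_measurable Q"
  shows "(\<integral>\<^sup>+\<omega>. f \<omega> \<partial>Pst) = (\<integral>\<^sup>+\<omega>. ennreal (lr \<omega>) * f \<omega> \<partial>Q)"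
proof -
  have "(\<integral>\<^sup>+\<omega>. f \<omega> \<partial>Pst) = (\<integral>\<^sup>+\<omega>. RN_deriv Q Pst \<omega> * f \<omega> \<partial>Q)"
    using sigma_finite_measure.RN_deriv_nn_integral[OF sfQ ac sPst] by simp
  also have "\<dots> = (\<integral>\<^sup>+\<omega>. ennreal (lr \<omega>) * f \<omega> \<partial>Q)"
    by (rule nn_integral_cong_AE) (use RN_ell in eventually_elim, auto)
  finally show ?thesis .
qed

lemma ell_pos: "AE \<omega> in Q. lr \<omega> > 0"
proof -
  let ?N = "{\<omega>\<in>space Q. lr \<omega> \<le> 0}"
  have Nm: "?N \<in> sets Q" by measurable
  have "emeasure Pst ?N = (\<integral>\<^sup>+\<omega>. indicator ?N \<omega> \<partial>Pst)"
    using Nm sPst by simp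
  also have "\<dots> = (\<integral>\<^sup>+\<omega>. ennreal (lr \<omega>) * indicator ?N \<omega> \<partial>Q)"
    using Nm by (intro nn_Pst) simp
  also have "\<dots> = (\<integral>\<^sup>+\<omega>. 0 \<partial>Q)"
    by (rule nn_integral_cong) (auto simp: indicator_def ennreal_eq_0_iff)
  finally have "?N \<in> null_sets Pst" using Nm sPst by auto
  then have "?N \<in> null_sets Q" using nQ by simp
  then show ?thesis
    by (rule AE_I') auto
qed

lemma nn_Q_via_Pst:
  assumes [measurable]: "Y \<in> borel_measurable Q"
  shows "(\<integral>\<^sup>+\<omega>. ennreal (Y \<omega>) \<partial>Q) = (\<integral>\<^sup>+\<omega>. ennreal (Y \<omega> / lr \<omega>) \<partial>Pst)"
proof -
  have "(\<integral>\<^sup>+\<omega>. ennreal (Y \<omega> / lr \<omega>) \<partial>Pst) = (\<integral>\<^sup>+\<omega>. ennreal (lr \<omega>) * ennreal (Y \<omega> / lr \<omega>) \<partial>Q)"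
    by (intro nn_Pst) measurable
  also have "\<dots> = (\<integral>\<^sup>+\<omega>. ennreal (Y \<omega>) \<partial>Q)"
  proof (rule nn_integral_cong_AE)
    show "AE \<omega> in Q. ennreal (lr \<omega>) * ennreal (Y \<omega> / lr \<omega>) = ennreal (Y \<omega>)"
      using ell_pos
    proof eventually_elim
      case (elim \<omega>)
      show ?case
      proof (cases "Y \<omega> \<ge> 0")
        case True
        then show ?thesis using elim by (simp add: ennreal_mult[symmetric])
      next
        case False
        then have "Y \<omega> / lr \<omega> \<le> 0" using elim by (simp add: divide_nonpos_pos)
        then show ?thesis using False by (simp add: ennreal_eq_0_iff ennreal_neg)
      qed
    qed
  qed
  finally show ?thesis by simp
qed

lemma inv_ell_fin: "(\<integral>\<^sup>+\<omega>. ennreal (1 / lr \<omega>) \<partial>Pst) \<le> 1"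
proof -
  have "(\<integral>\<^sup>+\<omega>. ennreal (1 / lr \<omega>) \<partial>Pst) = (\<integral>\<^sup>+\<omega>. ennreal 1 \<partial>Q)"
    using nn_Q_via_Pst[of "\<lambda>_. 1"] by simp
  also have "\<dots> = 1" using Q prob_space.emeasure_space_1 by (simp)
  finally show ?thesis by simp
qed

end


lemma law_cdf_cdf:
  assumes P: "prob_space P" and V[measurable]: "V \<in> borel_measurable P"
  shows "law_cdf P V = cdf (distr P borel V)"
proof
  fix x
  show "law_cdf P V x = cdf (distr P borel V) x"
    unfolding law_cdf_def cdf_def
    by (subst measure_distr) (auto intro!: arg_cong[where f="measure P"])
qed

lemma law_cdf_mono:
  assumes P: "prob_space P" and V[measurable]: "V \<in> borel_measurable P" and "x \<le> y"
  shows "law_cdf P V x \<le> law_cdf P V y"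
  unfolding law_cdf_def using assms(3)
  by (intro finite_measure.finite_measure_mono[OF prob_space.finite_measure[OF P]]) auto

lemma PIT:
  assumes P: "prob_space P" and V[measurable]: "V \<in> borel_measurable P"
    and cont: "continuous_on UNIV (law_cdf P V)" and u: "0 \<le> u" "u < 1"
  shows "measure P {\<omega>\<in>space P. law_cdf P V (V \<omega>) \<le> u} = u"
proof -
  interpret P: prob_space P by fact
  interpret D: real_distribution "distr P borel V" by simp
  let ?G = "law_cdf P V"
  have G: "?G = cdf (distr P borel V)" by (rule law_cdf_cdf[OF P V])
  define S where "S = {t. ?G t \<le> u}"
  show ?thesis
  proof (cases "S = {}")
    case True
    have "u = 0"
    proof (rule ccontr)
      assume "u \<noteq> 0" then have "u > 0" using u by simp
      have "(?G \<longlongrightarrow> 0) at_bot" unfolding G by (rule D.cdf_lim_at_bot)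
      from order_tendstoD(2)[OF this \<open>u > 0\<close>] obtain t where "?G t < u"
        by (metis eventually_happens' trivial_limit_at_bot_linorder)
      then have "t \<in> S" unfolding S_def by simp
      then show False using True by simp
    qed
    moreover have "{\<omega>\<in>space P. ?G (V \<omega>) \<le> u} = {}" using True unfolding S_def by auto
    ultimately show ?thesis by (metis measure_empty)
  next
    case False
    have "(?G \<longlongrightarrow> 1) at_top" unfolding G by (rule D.cdf_lim_at_top_prob)
    from order_tendstoD(1)[OF this \<open>u < 1\<close>] obtain b where b: "\<And>t. t \<ge> b \<Longrightarrow> ?G t > u"
      by (auto simp: eventually_at_top_linorder)
    have bdd: "bdd_above S" unfolding S_def
    proof (rule bdd_aboveI[of _ b])
      fix t assume "t \<in> {t. ?G t \<le> u}"
      then have "\<not> ?G t > u" by simp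
      then have "\<not> t \<ge> b" using b by blast
      then show "t \<le> b" by simp
    qed
    have cl: "closed S" unfolding S_def
      by (rule closed_Collect_le[OF cont]) simp
    define s where "s = Sup S"
    have sS: "s \<in> S" unfolding s_def using False bdd cl by (rule closed_contains_Sup)
    have Gs: "?G s = u"
    proof (rule antisym)
      show "?G s \<le> u" using sS unfolding S_def by simp
      show "u \<le> ?G s"
      proof (rule ccontr)
        assume "\<not> u \<le> ?G s"
        then have e: "u - ?G s > 0" by simp
        have "isCont ?G s" using cont by (simp add: continuous_on_eq_continuous_at)
        then obtain d where d: "d > 0" "\<And>y. dist y s < d \<Longrightarrow> dist (?G y) (?G s) < u - ?G s"
          unfolding continuous_at_eps_delta using e by blast
        have "dist (s + d/2) s < d" using d by (simp add: dist_real_def)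
        then have "\<bar>?G (s + d/2) - ?G s\<bar> < u - ?G s" using d(2)[of "s + d/2"] by (simp add: dist_real_def)
        then have "?G (s + d/2) < u" by linarith
        then have "s + d/2 \<in> S" unfolding S_def by simp
        then have "s + d/2 \<le> s" unfolding s_def using bdd by (rule cSup_upper)
        then show False using d by simp
      qed
    qed
    have "{\<omega>\<in>space P. ?G (V \<omega>) \<le> u} = {\<omega>\<in>space P. V \<omega> \<le> s}"
    proof (intro Collect_cong conj_cong refl iffI)
      fix \<omega> assume "?G (V \<omega>) \<le> u"
      then have "V \<omega> \<in> S" unfolding S_def by simp
      then show "V \<omega> \<le> s" unfolding s_def using bdd by (rule cSup_upper)
    next
      fix \<omega> assume "V \<omega> \<le> s"
      then have "?G (V \<omega>) \<le> ?G s" by (rule law_cdf_mono[OF P V])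
      then show "?G (V \<omega>) \<le> u" using Gs by simp
    qed
    also have "measure P \<dots> = ?G s" unfolding law_cdf_def by simp
    finally show ?thesis using Gs by simp
  qed
qed

lemma PIT_top_null:
  assumes P: "prob_space P" and V[measurable]: "V \<in> borel_measurable P"
    and cont: "continuous_on UNIV (law_cdf P V)"
  shows "measure P {\<omega>\<in>space P. law_cdf P V (V \<omega>) \<ge> 1} = 0"
proof -
  interpret P: prob_space P by fact
  let ?G = "law_cdf P V"
  let ?m = "measure P {\<omega>\<in>space P. ?G (V \<omega>) \<ge> 1}"
  have G[measurable]: "?G \<in> borel_measurable borel"
    by (rule borel_measurable_mono) (auto simp: mono_def intro: law_cdf_mono[OF P V])
  have "?m \<le> e" if "e > 0" for e
  proof -
    define u where "u = max 0 (1 - e)"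
    have u: "0 \<le> u" "u < 1" using that unfolding u_def by auto
    have "?m \<le> measure P (space P - {\<omega>\<in>space P. ?G (V \<omega>) \<le> u})"
      by (rule P.finite_measure_mono) (use u in auto)
    also have "\<dots> = 1 - u"
      by (subst P.prob_compl) (auto simp: PIT[OF P V cont u])
    also have "\<dots> \<le> e" unfolding u_def by auto
    finally show ?thesis .
  qed
  then have "?m \<le> 0" by (meson dense_le le_less_trans linorder_not_le order_less_irrefl)
  then show ?thesis using measure_nonneg[of P] by (meson antisym)
qed



locale QL =
  fixes P :: "'a measure" and V :: "'a \<Rightarrow> real" and X :: "'a \<Rightarrow> real"
  assumes P: "prob_space P" and V[measurable]: "V \<in> borel_measurable P"
    and cont: "continuous_on UNIV (law_cdf P V)"
    and X[measurable]: "X \<in> borel_measurable P" and Xnn: "\<And>\<omega>. \<omega> \<in> space P \<Longrightarrow> 0 \<le> X \<omega>"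
begin

abbreviation "G \<equiv> law_cdf P V"
abbreviation "F \<equiv> law_cdf P X"
definition "Iq u = Inf {x. u \<le> F x}"
definition "h t = (if 0 < G t \<and> G t < 1 then Iq (G t) else 0)"

interpretation Pp: prob_space P by (rule P)
interpretation DX: cdf_distribution "distr P borel X"
  by (simp add: cdf_distribution_def)

lemma FC: "F = DX.C" by (rule law_cdf_cdf[OF P X])

lemma pseudo: "0 < u \<Longrightarrow> u < 1 \<Longrightarrow> (u \<le> F x \<longleftrightarrow> Iq u \<le> x)"
  unfolding Iq_def FC by (rule DX.pseudoinverse)

lemma G_le1: "G t \<le> 1" and G_ge0: "0 \<le> G t"
  unfolding law_cdf_def by auto

lemma F_neg: "x < 0 \<Longrightarrow> F x = 0"
proof -
  assume "x < 0"
  then have "{\<omega>\<in>space P. X \<omega> \<le> x} = {}" using Xnn by force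
  then show "F x = 0" unfolding law_cdf_def by (metis measure_empty)
qed

lemma Iq_nonneg: "0 < u \<Longrightarrow> u < 1 \<Longrightarrow> 0 \<le> Iq u"
proof (rule ccontr)
  assume u: "0 < u" "u < 1" and "\<not> 0 \<le> Iq u"
  then have "Iq u < 0" by simp
  have "u \<le> F (Iq u)" using pseudo[OF u] by simp
  then show False using F_neg[OF \<open>Iq u < 0\<close>] u by simp
qed

lemma Iq_mono: "0 < u \<Longrightarrow> u \<le> v \<Longrightarrow> v < 1 \<Longrightarrow> Iq u \<le> Iq v"
proof -
  assume a: "0 < u" "u \<le> v" "v < 1"
  have "v \<le> F (Iq v)" using pseudo[of v "Iq v"] a by simp
  then have "u \<le> F (Iq v)" using a by simp
  then show "Iq u \<le> Iq v" using pseudo[of u "Iq v"] a by simp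
qed

lemma h_nonneg: "0 \<le> h t"
  unfolding h_def using Iq_nonneg by auto

lemma h_mono: "0 < G s \<Longrightarrow> G t < 1 \<Longrightarrow> s \<le> t \<Longrightarrow> h s \<le> h t"
proof -
  assume a: "0 < G s" "G t < 1" "s \<le> t"
  have "G s \<le> G t" by (rule law_cdf_mono[OF P V a(3)])
  then show "h s \<le> h t" unfolding h_def using a by (auto intro!: Iq_mono)
qed

lemma G_meas[measurable]: "G \<in> borel_measurable borel"
  by (rule borel_measurable_mono) (auto simp: mono_def intro: law_cdf_mono[OF P V])

lemma Iq_meas: "(\<lambda>u. if u \<in> {0<..<1} then Iq u else 0) \<in> borel_measurable borel"
proof -
  have "Iq \<in> borel_measurable (restrict_space borel {0<..<1})"
    unfolding Iq_def FC by (rule DX.measurable_CI)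
  then show ?thesis by (subst measurable_restrict_space_iff[symmetric]) auto
qed

lemma h_meas[measurable]: "h \<in> borel_measurable borel"
proof -
  have eq: "h = (\<lambda>u. if u \<in> {0<..<1} then Iq u else 0) \<circ> G"
    unfolding h_def by (auto simp: fun_eq_iff)
  show ?thesis unfolding eq by (rule measurable_comp[OF G_meas Iq_meas])
qed

lemma AE_mid: "AE \<omega> in P. 0 < G (V \<omega>) \<and> G (V \<omega>) < 1"
proof -
  have m0: "measure P {\<omega>\<in>space P. G (V \<omega>) \<le> 0} = 0"
    using PIT[OF P V cont, of 0] by simp
  have m1: "measure P {\<omega>\<in>space P. G (V \<omega>) \<ge> 1} = 0"
    by (rule PIT_top_null[OF P V cont])
  have n0: "{\<omega>\<in>space P. G (V \<omega>) \<le> 0} \<in> null_sets P"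
    using m0 by (auto simp: Pp.emeasure_eq_measure null_sets_def)
  have n1: "{\<omega>\<in>space P. G (V \<omega>) \<ge> 1} \<in> null_sets P"
    using m1 by (auto simp: Pp.emeasure_eq_measure null_sets_def)
  have "{\<omega>\<in>space P. G (V \<omega>) \<le> 0} \<union> {\<omega>\<in>space P. G (V \<omega>) \<ge> 1} \<in> null_sets P"
    using n0 n1 by (rule null_sets.Un)
  then show ?thesis by (rule AE_I') auto
qed

lemma law_eq:
  assumes Z[measurable]: "Z \<in> borel_measurable P" and Zh: "AE \<omega> in P. Z \<omega> = h (V \<omega>)"
  shows "law_cdf P Z = F"
proof
  fix x
  have "law_cdf P Z x = measure P {\<omega>\<in>space P. Z \<omega> \<le> x}"
    by (simp add: law_cdf_def)
  also have "\<dots> = measure P {\<omega>\<in>space P. G (V \<omega>) \<le> F x}"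
  proof (rule measure_eq_AE)
    show "AE \<omega> in P. (\<omega> \<in> {\<omega> \<in> space P. Z \<omega> \<le> x}) = (\<omega> \<in> {\<omega> \<in> space P. G (V \<omega>) \<le> F x})"
      using Zh AE_mid
    proof eventually_elim
      case (elim \<omega>)
      then have "Z \<omega> = Iq (G (V \<omega>))" unfolding h_def by simp
      moreover have "G (V \<omega>) \<le> F x \<longleftrightarrow> Iq (G (V \<omega>)) \<le> x"
        using elim(2) by (intro pseudo) auto
      ultimately have "Z \<omega> \<le> x \<longleftrightarrow> G (V \<omega>) \<le> F x" by simp
      then show ?case by blast
    qed
  qed (measurable, measurable)
  also have "\<dots> = F x"
  proof (cases "F x < 1")
    case True
    show ?thesis by (rule PIT[OF P V cont _ True]) (simp add: law_cdf_def)
  next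
    case False
    have "F x \<le> 1" unfolding law_cdf_def by (rule Pp.prob_le_1)
    then have F1: "F x = 1" using False by simp
    have "{\<omega>\<in>space P. G (V \<omega>) \<le> F x} = space P" using G_le1 F1 by auto
    then show ?thesis using F1 Pp.prob_space by simp
  qed
  finally show "law_cdf P Z x = F x" .
qed

end


lemma bathtub:
  fixes c :: "'a \<Rightarrow> real"
  assumes P: "prob_space P" and c[measurable]: "c \<in> borel_measurable P" and ci: "integrable P c"
    and A[measurable]: "A \<in> sets P" and B[measurable]: "B \<in> sets P"
    and AB: "measure P A = measure P B"
    and k1: "AE \<omega> in P. \<omega> \<in> B \<longrightarrow> c \<omega> \<le> \<kappa>" and k2: "AE \<omega> in P. \<omega> \<notin> B \<longrightarrow> \<kappa> \<le> c \<omega>"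
  shows "(\<integral>\<omega>. c \<omega> * indicator B \<omega> \<partial>P) \<le> (\<integral>\<omega>. c \<omega> * indicator A \<omega> \<partial>P)"
proof -
  interpret P: prob_space P by fact
  have iA: "integrable P (\<lambda>\<omega>. c \<omega> * indicator A \<omega>)"
    by (rule integrable_real_mult_indicator[OF _ ci]) simp
  have iB: "integrable P (\<lambda>\<omega>. c \<omega> * indicator B \<omega>)"
    by (rule integrable_real_mult_indicator[OF _ ci]) simp
  have iA1: "integrable P (indicator A :: _ \<Rightarrow> real)" using integrable_real_mult_indicator[OF A, of "\<lambda>_. 1"] by simp
  have iB1: "integrable P (indicator B :: _ \<Rightarrow> real)" using integrable_real_mult_indicator[OF B, of "\<lambda>_. 1"] by simp
  have "0 \<le> (\<integral>\<omega>. (c \<omega> * indicator A \<omega> - c \<omega> * indicator B \<omega>) - \<kappa> * (indicator A \<omega> - indicator B \<omega>) \<partial>P)"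
  proof (rule integral_nonneg_AE)
    show "AE \<omega> in P. 0 \<le> c \<omega> * indicator A \<omega> - c \<omega> * indicator B \<omega> - \<kappa> * (indicator A \<omega> - indicator B \<omega>)"
      using k1 k2 by eventually_elim (auto simp: indicator_def algebra_simps)
  qed
  also have "\<dots> = (\<integral>\<omega>. c \<omega> * indicator A \<omega> \<partial>P) - (\<integral>\<omega>. c \<omega> * indicator B \<omega> \<partial>P)
     - \<kappa> * ((\<integral>\<omega>. indicator A \<omega> \<partial>P) - (\<integral>\<omega>. indicator B \<omega> \<partial>P))"
    using iA iB iA1 iB1 by (simp add: Bochner_Integration.integral_diff)
  also have "(\<integral>\<omega>. indicator A \<omega> \<partial>P) - (\<integral>\<omega>. indicator B \<omega> \<partial>P) = (0::real)"
    using AB by simp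
  finally show ?thesis by simp
qed

lemma bathtub2:
  fixes c :: "'a \<Rightarrow> real"
  assumes P: "prob_space P" and c[measurable]: "c \<in> borel_measurable P" and ci: "integrable P c"
    and cnn: "\<And>\<omega>. \<omega> \<in> space P \<Longrightarrow> 0 \<le> c \<omega>"
    and A[measurable]: "A \<in> sets P" and B[measurable]: "B \<in> sets P"
    and AB: "measure P A = measure P B"
    and D: "AE \<omega> in P. \<omega> \<in> D" and DS: "D \<subseteq> space P"
    and ord: "\<And>\<omega> \<omega>'. \<omega> \<in> D \<Longrightarrow> \<omega> \<in> B \<Longrightarrow> \<omega>' \<in> D \<Longrightarrow> \<omega>' \<notin> B \<Longrightarrow> c \<omega> \<le> c \<omega>'"
  shows "(\<integral>\<omega>. c \<omega> * indicator B \<omega> \<partial>P) \<le> (\<integral>\<omega>. c \<omega> * indicator A \<omega> \<partial>P)"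
proof (cases "D - B = {}")
  case True
  interpret P: prob_space P by fact
  have aeB: "AE \<omega> in P. \<omega> \<in> B" using D True by (auto elim!: eventually_mono)
  then have "measure P B = 1" using P.prob_eq_1 B by blast
  then have "measure P A = 1" using AB by simp
  then have aeA: "AE \<omega> in P. \<omega> \<in> A" using P.prob_eq_1 A by blast
  have "(\<integral>\<omega>. c \<omega> * indicator B \<omega> \<partial>P) \<le> (\<integral>\<omega>. c \<omega> \<partial>P)"
    using ci cnn integrable_real_mult_indicator[OF B ci] by (intro integral_mono) (auto simp: indicator_def)
  also have "\<dots> = (\<integral>\<omega>. c \<omega> * indicator A \<omega> \<partial>P)"
    by (rule integral_cong_AE) (use aeA in \<open>auto simp: indicator_def\<close>)
  finally show ?thesis .
next
  case False
  define \<kappa> where "\<kappa> = Inf (c ` (D - B))"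
  have bdd: "bdd_below (c ` (D - B))"
    using cnn DS by (intro bdd_belowI[of _ 0]) auto
  show ?thesis
  proof (rule bathtub[OF P c ci A B AB, of \<kappa>])
    show "AE \<omega> in P. \<omega> \<in> B \<longrightarrow> c \<omega> \<le> \<kappa>"
      using D
    proof eventually_elim
      case (elim \<omega>)
      show ?case unfolding \<kappa>_def
        using False ord[of \<omega>] elim by (auto intro!: cInf_greatest)
    qed
    show "AE \<omega> in P. \<omega> \<notin> B \<longrightarrow> \<kappa> \<le> c \<omega>"
      using D
    proof eventually_elim
      case (elim \<omega>)
      show ?case unfolding \<kappa>_def
        using bdd elim by (auto intro!: cInf_lower)
    qed
  qed
qed



lemma layer:
  fixes c Y :: "'a \<Rightarrow> real"
  assumes P: "prob_space P" and c[measurable]: "c \<in> borel_measurable P"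
    and Y[measurable]: "Y \<in> borel_measurable P"
    and cnn: "\<And>\<omega>. \<omega> \<in> space P \<Longrightarrow> 0 \<le> c \<omega>" and Ynn: "\<And>\<omega>. \<omega> \<in> space P \<Longrightarrow> 0 \<le> Y \<omega>"
  shows "(\<integral>\<^sup>+\<omega>. ennreal (c \<omega> * Y \<omega>) \<partial>P) = (\<integral>\<^sup>+s. (\<integral>\<^sup>+\<omega>. ennreal (c \<omega>) * indicator {0..<Y \<omega>} s \<partial>P) \<partial>lborel)"
proof -
  interpret P: prob_space P by fact
  interpret PL: pair_sigma_finite P lborel
    by (simp add: pair_sigma_finite_def P.sigma_finite_measure_axioms lborel.sigma_finite_measure_axioms)
  have eq: "(\<lambda>(\<omega>, s). ennreal (c \<omega>) * indicator {0..<Y \<omega>} s) =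
      (\<lambda>p. ennreal (c (fst p)) * (if 0 \<le> snd p \<and> snd p < Y (fst p) then 1 else 0))"
    by (auto simp: fun_eq_iff indicator_def)
  have m: "(\<lambda>(\<omega>, s). ennreal (c \<omega>) * indicator {0..<Y \<omega>} s) \<in> borel_measurable (P \<Otimes>\<^sub>M lborel)"
    unfolding eq by measurable
  have "(\<integral>\<^sup>+s. (\<integral>\<^sup>+\<omega>. ennreal (c \<omega>) * indicator {0..<Y \<omega>} s \<partial>P) \<partial>lborel)
      = (\<integral>\<^sup>+\<omega>. (\<integral>\<^sup>+s. ennreal (c \<omega>) * indicator {0..<Y \<omega>} s \<partial>lborel) \<partial>P)"
    by (rule PL.Fubini'[OF m])
  also have "\<dots> = (\<integral>\<^sup>+\<omega>. ennreal (c \<omega> * Y \<omega>) \<partial>P)"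
  proof (rule nn_integral_cong)
    fix \<omega> assume \<omega>: "\<omega> \<in> space P"
    have "(\<integral>\<^sup>+s. ennreal (c \<omega>) * indicator {0..<Y \<omega>} s \<partial>lborel) = ennreal (c \<omega>) * emeasure lborel {0..<Y \<omega>}"
      by (rule nn_integral_cmult_indicator) simp
    also have "\<dots> = ennreal (c \<omega> * Y \<omega>)"
      using Ynn[OF \<omega>] cnn[OF \<omega>] by (simp add: ennreal_mult)
    finally show "(\<integral>\<^sup>+s. ennreal (c \<omega>) * indicator {0..<Y \<omega>} s \<partial>lborel) = ennreal (c \<omega> * Y \<omega>)" .
  qed
  finally show ?thesis by simp
qed

lemma upper_prob:
  assumes P: "prob_space P" and Y[measurable]: "Y \<in> borel_measurable P"
  shows "measure P {\<omega>\<in>space P. s < Y \<omega>} = 1 - law_cdf P Y s"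
proof -
  interpret P: prob_space P by fact
  have "{\<omega>\<in>space P. s < Y \<omega>} = space P - {\<omega>\<in>space P. Y \<omega> \<le> s}" by auto
  then show ?thesis unfolding law_cdf_def by (simp add: P.prob_compl)
qed

lemma rearr:
  fixes c Y Z :: "'a \<Rightarrow> real"
  assumes P: "prob_space P" and c[measurable]: "c \<in> borel_measurable P" and ci: "integrable P c"
    and cnn: "\<And>\<omega>. \<omega> \<in> space P \<Longrightarrow> 0 \<le> c \<omega>"
    and Y[measurable]: "Y \<in> borel_measurable P" and Ynn: "\<And>\<omega>. \<omega> \<in> space P \<Longrightarrow> 0 \<le> Y \<omega>"
    and Z[measurable]: "Z \<in> borel_measurable P" and Znn: "\<And>\<omega>. \<omega> \<in> space P \<Longrightarrow> 0 \<le> Z \<omega>"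
    and law: "law_cdf P Y = law_cdf P Z"
    and D: "AE \<omega> in P. \<omega> \<in> D" and DS: "D \<subseteq> space P"
    and ord: "\<And>s \<omega> \<omega>'. \<omega> \<in> D \<Longrightarrow> \<omega>' \<in> D \<Longrightarrow> s < Z \<omega> \<Longrightarrow> \<not> s < Z \<omega>' \<Longrightarrow> c \<omega> \<le> c \<omega>'"
  shows "(\<integral>\<^sup>+\<omega>. ennreal (c \<omega> * Z \<omega>) \<partial>P) \<le> (\<integral>\<^sup>+\<omega>. ennreal (c \<omega> * Y \<omega>) \<partial>P)"
proof -
  interpret P: prob_space P by fact
  have inner: "(\<integral>\<^sup>+\<omega>. ennreal (c \<omega>) * indicator {0..<W \<omega>} s \<partial>P) = ennreal (\<integral>\<omega>. c \<omega> * indicator {\<omega>\<in>space P. s < W \<omega>} \<omega> \<partial>P)"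
    if s: "0 \<le> s" and W[measurable]: "W \<in> borel_measurable P" and Wnn: "\<And>\<omega>. \<omega> \<in> space P \<Longrightarrow> 0 \<le> W \<omega>" for s :: real and W :: "'a \<Rightarrow> real"
  proof -
    have Wm: "{\<omega>\<in>space P. s < W \<omega>} \<in> sets P"
      by measurable
    have "(\<integral>\<^sup>+\<omega>. ennreal (c \<omega>) * indicator {0..<W \<omega>} s \<partial>P) = (\<integral>\<^sup>+\<omega>. ennreal (c \<omega> * indicator {\<omega>\<in>space P. s < W \<omega>} \<omega>) \<partial>P)"
      by (rule nn_integral_cong) (use s in \<open>auto simp: indicator_def\<close>)
    also have "\<dots> = ennreal (\<integral>\<omega>. c \<omega> * indicator {\<omega>\<in>space P. s < W \<omega>} \<omega> \<partial>P)"
      using Wm by (intro nn_integral_eq_integral)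
        (auto intro!: integrable_real_mult_indicator ci AE_I2 simp: cnn)
    finally show ?thesis .
  qed
  have "(\<integral>\<^sup>+s. (\<integral>\<^sup>+\<omega>. ennreal (c \<omega>) * indicator {0..<Z \<omega>} s \<partial>P) \<partial>lborel)
     \<le> (\<integral>\<^sup>+s. (\<integral>\<^sup>+\<omega>. ennreal (c \<omega>) * indicator {0..<Y \<omega>} s \<partial>P) \<partial>lborel)"
  proof (rule nn_integral_mono)
    fix s :: real
    show "(\<integral>\<^sup>+\<omega>. ennreal (c \<omega>) * indicator {0..<Z \<omega>} s \<partial>P) \<le> (\<integral>\<^sup>+\<omega>. ennreal (c \<omega>) * indicator {0..<Y \<omega>} s \<partial>P)"
    proof (cases "0 \<le> s")
      case False
      then show ?thesis by (simp add: indicator_def)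
    next
      case True
      let ?A = "{\<omega>\<in>space P. s < Y \<omega>}" and ?B = "{\<omega>\<in>space P. s < Z \<omega>}"
      have "(\<integral>\<omega>. c \<omega> * indicator ?B \<omega> \<partial>P) \<le> (\<integral>\<omega>. c \<omega> * indicator ?A \<omega> \<partial>P)"
      proof (rule bathtub2[OF P c ci cnn _ _ _ D DS])
        show "measure P ?A = measure P ?B"
          using upper_prob[OF P Y, of s] upper_prob[OF P Z, of s] law by simp
        fix \<omega> \<omega>' assume "\<omega> \<in> D" "\<omega> \<in> ?B" "\<omega>' \<in> D" "\<omega>' \<notin> ?B"
        then show "c \<omega> \<le> c \<omega>'" using ord[of \<omega> \<omega>' s] DS by auto
      qed measurable
      then have "ennreal (\<integral>\<omega>. c \<omega> * indicator ?B \<omega> \<partial>P) \<le> ennreal (\<integral>\<omega>. c \<omega> * indicator ?A \<omega> \<partial>P)"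
        by (rule ennreal_leI)
      then show ?thesis
        using inner[OF True Z Znn] inner[OF True Y Ynn] by simp
    qed
  qed
  moreover note layer[OF P c Y cnn Ynn] layer[OF P c Z cnn Znn]
  ultimately show ?thesis by (simp only:)
qed



lemma ae_transfer:
  assumes "sets P = sets Q" "null_sets P = null_sets Q" "AE x in Q. R x"
  shows "AE x in P. R x"
proof -
  from assms(3) obtain N where N: "N \<in> null_sets Q" "{x\<in>space Q. \<not> R x} \<subseteq> N"
    by (auto simp: eventually_ae_filter)
  have "space P = space Q" using assms(1) by (rule sets_eq_imp_space_eq)
  then show ?thesis using N assms(2) by (intro AE_I'[of N]) auto
qed

lemma interval_law:
  assumes P: "prob_space P" and V[measurable]: "V \<in> borel_measurable P"
  shows "interval_measure (law_cdf P V) = distr P borel V"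
proof -
  interpret P: prob_space P by fact
  let ?M = "distr P borel V"
  interpret M: real_distribution ?M by simp
  have L: "law_cdf P V = cdf ?M"
  proof
    fix x show "law_cdf P V x = cdf ?M x"
      unfolding law_cdf_def cdf_def
      by (subst measure_distr) (auto intro!: arg_cong[where f="measure P"])
  qed
  have mono: "\<And>x y. x \<le> y \<Longrightarrow> cdf ?M x \<le> cdf ?M y" by (rule M.cdf_nondecreasing)
  have rc: "\<And>a. continuous (at_right a) (cdf ?M)" by (rule M.cdf_is_right_cont)
  have bot: "(cdf ?M \<longlongrightarrow> 0) at_bot" by (rule M.cdf_lim_at_bot)
  have top: "(cdf ?M \<longlongrightarrow> 1) at_top" by (rule M.cdf_lim_at_top_prob)
  have ci: "cdf (interval_measure (cdf ?M)) = cdf ?M"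
    using cdf_interval_measure[of "cdf ?M"] mono rc bot by blast
  have "interval_measure (cdf ?M) = ?M"
    by (rule cdf_unique[OF real_distribution_interval_measure[OF mono rc bot top] M.real_distribution_axioms ci])
  then show ?thesis using L by simp
qed

definition trunc :: "(real \<Rightarrow> real) \<Rightarrow> (real \<Rightarrow> real) \<Rightarrow> (real \<Rightarrow> real) \<Rightarrow> nat \<Rightarrow> real \<Rightarrow> real" where
  "trunc G h f n t = (if G t \<le> 0 then f 0 else if G t < 1 then min (f (h t)) (max (real n) (f 0)) else max (real n) (f 0))"

lemma trunc_mono:
  fixes G h f :: "real \<Rightarrow> real"
  assumes Gm: "mono G" and f: "mono f" and hnn: "\<And>t. 0 \<le> h t"
    and hmono: "\<And>s t. 0 < G s \<Longrightarrow> G t < 1 \<Longrightarrow> s \<le> t \<Longrightarrow> h s \<le> h t"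
  shows "mono (trunc G h f n)"
proof (rule monoI)
  fix s t :: real assume st: "s \<le> t"
  have Gst: "G s \<le> G t" using Gm st by (rule monoD)
  have f0: "f 0 \<le> f (h u)" for u using f hnn by (simp add: monoD)
  show "trunc G h f n s \<le> trunc G h f n t"
  proof (cases "G s \<le> 0")
    case True
    then show ?thesis using f0[of t] by (auto simp: trunc_def)
  next
    case False
    show ?thesis
    proof (cases "G t < 1")
      case True
      then have "h s \<le> h t" using False st by (intro hmono) auto
      then have "f (h s) \<le> f (h t)" using f by (simp add: monoD)
      then show ?thesis using False True Gst by (auto simp: trunc_def)
    next
      case False2: False
      then show ?thesis using False Gst by (auto simp: trunc_def)
    qed
  qed
qed

lemma trunc_bound:
  fixes G h f :: "real \<Rightarrow> real"
  assumes f: "mono f" and hnn: "\<And>t. 0 \<le> h t"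
  shows "\<bar>trunc G h f n t\<bar> \<le> \<bar>f 0\<bar> + real n"
proof -
  have f0: "f 0 \<le> f (h t)" using f hnn by (simp add: monoD)
  then show ?thesis by (auto simp: trunc_def)
qed

lemma trunc_lim:
  fixes M :: "'a measure" and L Z :: "'a \<Rightarrow> real" and G h f :: "real \<Rightarrow> real"
  assumes M: "prob_space M" and L[measurable]: "L \<in> borel_measurable M" and Z[measurable]: "Z \<in> borel_measurable M"
    and Gm: "mono G" and f: "mono f" and hnn: "\<And>t. 0 \<le> h t"
    and hmono: "\<And>s t. 0 < G s \<Longrightarrow> G t < 1 \<Longrightarrow> s \<le> t \<Longrightarrow> h s \<le> h t"
    and fi: "integrable M (\<lambda>\<omega>. f (Z \<omega>))"
    and ae: "AE \<omega> in M. 0 < G (L \<omega>) \<and> G (L \<omega>) < 1 \<and> Z \<omega> = h (L \<omega>)"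
  shows "(\<lambda>n. \<integral>\<omega>. trunc G h f n (L \<omega>) \<partial>M) \<longlonglongrightarrow> (\<integral>\<omega>. f (Z \<omega>) \<partial>M)"
proof (rule integral_dominated_convergence[where w="\<lambda>\<omega>. \<bar>f (Z \<omega>)\<bar> + \<bar>f 0\<bar>"])
  interpret M: prob_space M by fact
  have fm[measurable]: "f \<in> borel_measurable borel" using f by (rule borel_measurable_mono)
  show "(\<lambda>\<omega>. f (Z \<omega>)) \<in> borel_measurable M" by measurable
  fix n
  have "mono (trunc G h f n)" using Gm f hnn hmono by (rule trunc_mono)
  then have [measurable]: "trunc G h f n \<in> borel_measurable borel" by (rule borel_measurable_mono)
  show "(\<lambda>\<omega>. trunc G h f n (L \<omega>)) \<in> borel_measurable M" by measurable
  show "integrable M (\<lambda>\<omega>. \<bar>f (Z \<omega>)\<bar> + \<bar>f 0\<bar>)" using fi by simp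
  show "AE \<omega> in M. norm (trunc G h f n (L \<omega>)) \<le> \<bar>f (Z \<omega>)\<bar> + \<bar>f 0\<bar>"
    using ae
  proof eventually_elim
    case (elim \<omega>)
    have "f 0 \<le> f (Z \<omega>)" using f hnn elim by (simp add: monoD)
    then show ?case using elim by (auto simp: trunc_def)
  qed
next
  show "AE \<omega> in M. (\<lambda>n. trunc G h f n (L \<omega>)) \<longlonglongrightarrow> f (Z \<omega>)"
    using ae
  proof eventually_elim
    case (elim \<omega>)
    obtain N :: nat where N: "f (Z \<omega>) \<le> real N" using real_arch_simple by blast
    have "eventually (\<lambda>n. trunc G h f n (L \<omega>) = f (Z \<omega>)) sequentially"
      unfolding eventually_sequentially
    proof (intro exI allI impI)
      fix n assume "N \<le> n"
      then have "f (Z \<omega>) \<le> real n" using N by (meson of_nat_le_iff order_trans)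
      then show "trunc G h f n (L \<omega>) = f (Z \<omega>)" using elim by (auto simp: trunc_def)
    qed
    then show ?case by (rule tendsto_eventually)
  qed
qed

lemma stoch_key:
  fixes P Pst :: "'a measure" and L Z :: "'a \<Rightarrow> real" and G h :: "real \<Rightarrow> real"
  assumes P: "prob_space P" and Pst: "prob_space Pst"
    and LP[measurable]: "L \<in> borel_measurable P" and ZP[measurable]: "Z \<in> borel_measurable P"
    and LS[measurable]: "L \<in> borel_measurable Pst" and ZS[measurable]: "Z \<in> borel_measurable Pst"
    and Gm: "mono G" and hnn: "\<And>t. 0 \<le> h t"
    and hmono: "\<And>s t. 0 < G s \<Longrightarrow> G t < 1 \<Longrightarrow> s \<le> t \<Longrightarrow> h s \<le> h t"
    and aeS: "AE \<omega> in Pst. 0 < G (L \<omega>) \<and> G (L \<omega>) < 1 \<and> Z \<omega> = h (L \<omega>)"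
    and aeP: "AE \<omega> in P. 0 < G (L \<omega>) \<and> G (L \<omega>) < 1 \<and> Z \<omega> = h (L \<omega>)"
    and C: "stoch_le F_FSD (law_cdf Pst L) (law_cdf P L)"
  shows "stoch_le F_FSD (law_cdf Pst Z) (law_cdf P Z)"
  unfolding stoch_le_def
proof (intro ballI impI)
  interpret P: prob_space P by fact
  interpret S: prob_space Pst by fact
  fix f assume "f \<in> F_FSD"
  then have f: "mono f" by (simp add: F_FSD_def)
  have fm[measurable]: "f \<in> borel_measurable borel" using f by (rule borel_measurable_mono)
  assume i1: "integrable (interval_measure (law_cdf Pst Z)) f"
    and i2: "integrable (interval_measure (law_cdf P Z)) f"
  have fiS: "integrable Pst (\<lambda>\<omega>. f (Z \<omega>))"
    using i1 unfolding interval_law[OF Pst ZS] by (subst integrable_distr_eq[symmetric]) auto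
  have fiP: "integrable P (\<lambda>\<omega>. f (Z \<omega>))"
    using i2 unfolding interval_law[OF P ZP] by (subst integrable_distr_eq[symmetric]) auto
  have le: "(\<integral>\<omega>. trunc G h f n (L \<omega>) \<partial>Pst) \<le> (\<integral>\<omega>. trunc G h f n (L \<omega>) \<partial>P)" for n
  proof -
    have tm: "mono (trunc G h f n)" using Gm f hnn hmono by (rule trunc_mono)
    then have tmm[measurable]: "trunc G h f n \<in> borel_measurable borel" by (rule borel_measurable_mono)
    have tF: "trunc G h f n \<in> F_FSD" using tm by (simp add: F_FSD_def)
    have bnd: "\<And>t. norm (trunc G h f n t) \<le> \<bar>f 0\<bar> + real n" using trunc_bound[OF f hnn] by simp
    interpret DS: prob_space "distr Pst borel L" by (rule S.prob_space_distr) simp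
    interpret DP: prob_space "distr P borel L" by (rule P.prob_space_distr) simp
    have "integrable (distr Pst borel L) (trunc G h f n)"
      by (rule DS.integrable_const_bound[where B="\<bar>f 0\<bar> + real n"]) (use bnd in \<open>auto intro!: AE_I2\<close>)
    moreover have "integrable (distr P borel L) (trunc G h f n)"
      by (rule DP.integrable_const_bound[where B="\<bar>f 0\<bar> + real n"]) (use bnd in \<open>auto intro!: AE_I2\<close>)
    ultimately have "integral\<^sup>L (distr Pst borel L) (trunc G h f n) \<le> integral\<^sup>L (distr P borel L) (trunc G h f n)"
      using C tF unfolding stoch_le_def interval_law[OF Pst LS] interval_law[OF P LP] by blast
    then show ?thesis by (simp add: integral_distr)
  qed
  have l1: "(\<lambda>n. \<integral>\<omega>. trunc G h f n (L \<omega>) \<partial>Pst) \<longlonglongrightarrow> (\<integral>\<omega>. f (Z \<omega>) \<partial>Pst)"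
    by (rule trunc_lim[OF Pst LS ZS Gm f hnn hmono fiS aeS])
  have l2: "(\<lambda>n. \<integral>\<omega>. trunc G h f n (L \<omega>) \<partial>P) \<longlonglongrightarrow> (\<integral>\<omega>. f (Z \<omega>) \<partial>P)"
    by (rule trunc_lim[OF P LP ZP Gm f hnn hmono fiP aeP])
  have "(\<integral>\<omega>. f (Z \<omega>) \<partial>Pst) \<le> (\<integral>\<omega>. f (Z \<omega>) \<partial>P)"
    using l1 l2 le by (intro LIMSEQ_le) auto
  then show "integral\<^sup>L (interval_measure (law_cdf Pst Z)) f \<le> integral\<^sup>L (interval_measure (law_cdf P Z)) f"
    unfolding interval_law[OF Pst ZS] interval_law[OF P ZP] by (simp add: integral_distr)
qed



lemma payoff_props:
  assumes "payoff Q S X" and S: "S \<in> borel_measurable Q" and Snn: "\<forall>\<omega>\<in>space Q. 0 \<le> S \<omega>"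
  shows "X \<in> borel_measurable Q" "\<And>\<omega>. \<omega> \<in> space Q \<Longrightarrow> 0 \<le> X \<omega>" "integrable Q X"
proof -
  from assms(1) obtain g where g: "g \<in> borel_measurable borel" "\<forall>x\<ge>0. 0 \<le> g x" "X = (\<lambda>\<omega>. g (S \<omega>))"
    and i: "integrable Q X" unfolding payoff_def by blast
  show "X \<in> borel_measurable Q" unfolding g(3) using g(1) S by measurable
  show "\<And>\<omega>. \<omega> \<in> space Q \<Longrightarrow> 0 \<le> X \<omega>" using g Snn by auto
  show "integrable Q X" by fact
qed

lemma real_Reals: "(x::real) \<in> \<real>"
proof -
  have "(of_real x :: real) \<in> \<real>" by (rule Reals_of_real)
  then show ?thesis by simp
qed

theorem mainTheorem13:
  fixes T r S0 x0 :: real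
    and Q :: "'a measure" and S :: "'a \<Rightarrow> real"
    and Ps :: "'a measure set" and Pst :: "'a measure"
    and W :: "'a measure \<Rightarrow> ('a \<Rightarrow> real) \<Rightarrow> real"
    and Xt :: "'a \<Rightarrow> real"
  assumes T_pos: "T > 0" and S0_pos: "S0 > 0"
    and Q_prob: "prob_space Q"
    and S_meas: "S \<in> borel_measurable Q"
    and S_nonneg: "\<forall>\<omega>\<in>space Q. 0 \<le> S \<omega>"
    and F_sigma: "sets Q = sets (vimage_algebra (space Q) S borel)"
    and Ps_prob: "\<forall>P\<in>Ps. prob_space P \<and> sets P = sets Q"
    and Ps_equiv_Q: "\<forall>P\<in>Ps. null_sets P = null_sets Q"
    and Ps_equiv: "\<forall>P\<in>Ps. \<forall>P'\<in>Ps. null_sets P = null_sets P'"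
    and x0_pos: "x0 > 0"
    and C2_comp: "composition_consistent F_FSD"
    and C2_cost: "cost_consistent F_FSD r T Q S Ps"
    and C3: "least_favorable F_FSD Q Ps Pst"
    and C4_cont: "continuous_on UNIV (law_cdf Pst (density_ratio Q Pst))"
    and C4_var: "integrable Pst (\<lambda>\<omega>. (1 / density_ratio Q Pst \<omega>)\<^sup>2)"
    and W_law_inv: "law_invariant_family Q S Ps W"
    and W_fam_cons: "family_consistent F_FSD Ps W (family_budget_set r T Q S Ps W x0) Pst"
    and unique_sol: "unique_robust_solution Q (family_budget_set r T Q S Ps W x0) Ps W Xt"
  shows "cost_efficient r T Q S Pst Xt"
proof (rule ccontr)
  assume nce: "\<not> cost_efficient r T Q S Pst Xt"
  let ?YY = "family_budget_set r T Q S Ps W x0"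
  have Pst_in: "Pst \<in> Ps" using C3 unfolding least_favorable_def by blast
  have Xt_in: "Xt \<in> ?YY" using unique_sol unfolding unique_robust_solution_def by blast
  then have "Xt \<in> budget_set r T Q S (W Pst) x0" using Pst_in unfolding family_budget_set_def by blast
  then have Xt_pay: "payoff Q S Xt" and Xt_price: "price r T Q Xt \<le> x0"
    unfolding budget_set_def by auto
  from nce Xt_pay obtain Y where Y_pay: "payoff Q S Y" and Y_law: "law_cdf Pst Y = law_cdf Pst Xt"
    and Y_price: "price r T Q Y < price r T Q Xt"
    unfolding cost_efficient_def by (auto simp: not_le)
  interpret Qp: prob_space Q by (rule Q_prob)
  have Pst_prob: "prob_space Pst" and sPst: "sets Pst = sets Q" using Ps_prob Pst_in by auto
  have nPst: "null_sets Pst = null_sets Q" using Ps_equiv_Q Pst_in by auto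
  interpret Sp: prob_space Pst by (rule Pst_prob)
  interpret QP Q Pst by (unfold_locales) (fact Q_prob Pst_prob sPst nPst)+
  have spPst: "space Pst = space Q" using sPst by (rule sets_eq_imp_space_eq)
  let ?L = "density_ratio Q Pst"
  have LQ[measurable]: "?L \<in> borel_measurable Q" by (rule ell_meas)
  have LS[measurable]: "?L \<in> borel_measurable Pst" by (subst measurable_cong_sets[OF sPst refl]) (rule LQ)
  note Xt_props = payoff_props[OF Xt_pay S_meas S_nonneg]
  note Y_props = payoff_props[OF Y_pay S_meas S_nonneg]
  have XtS: "Xt \<in> borel_measurable Pst" by (subst measurable_cong_sets[OF sPst refl]) (rule Xt_props(1))
  have YS: "Y \<in> borel_measurable Pst" by (subst measurable_cong_sets[OF sPst refl]) (rule Y_props(1))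
  interpret QL Pst ?L Xt
    by unfold_locales (use Pst_prob LS C4_cont XtS Xt_props(2) spPst in auto)
  obtain \<phi> where \<phi>m: "\<phi> \<in> borel_measurable borel" and \<phi>: "\<forall>\<omega>\<in>space Q. ?L \<omega> = \<phi> (S \<omega>)"
    using factor_through[OF F_sigma LQ] by blast
  define Z where "Z = (\<lambda>\<omega>. h (\<phi> (S \<omega>)))"
  have ZQ[measurable]: "Z \<in> borel_measurable Q" unfolding Z_def using \<phi>m S_meas h_meas by measurable
  have ZS[measurable]: "Z \<in> borel_measurable Pst" by (subst measurable_cong_sets[OF sPst refl]) (rule ZQ)
  have Zh: "\<And>\<omega>. \<omega> \<in> space Q \<Longrightarrow> Z \<omega> = h (?L \<omega>)" unfolding Z_def using \<phi> by simp
  have Znn: "\<And>\<omega>. 0 \<le> Z \<omega>" unfolding Z_def by (rule h_nonneg)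
  have Z_law: "law_cdf Pst Z = law_cdf Pst Xt"
    by (rule law_eq[OF ZS]) (use Zh spPst in \<open>auto intro!: AE_I2\<close>)
  define c where "c = (\<lambda>\<omega>. 1 / ?L \<omega>)"
  have cS[measurable]: "c \<in> borel_measurable Pst" unfolding c_def using LS by measurable
  have cnn: "\<And>\<omega>. 0 \<le> c \<omega>" unfolding c_def by (simp add: density_ratio_def)
  have ci: "integrable Pst c"
  proof (rule integrableI_nonneg)
    show "AE x in Pst. 0 \<le> c x" using cnn by simp
    have "(\<integral>\<^sup>+x. ennreal (c x) \<partial>Pst) \<le> 1" unfolding c_def by (rule inv_ell_fin)
    then show "(\<integral>\<^sup>+x. ennreal (c x) \<partial>Pst) < \<infinity>" by (simp add: le_less_trans)
  qed (fact cS)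
  define D where "D = {\<omega>\<in>space Pst. 0 < ?L \<omega> \<and> 0 < G (?L \<omega>) \<and> G (?L \<omega>) < 1}"
  have posS: "AE \<omega> in Pst. 0 < ?L \<omega>" by (rule ae_transfer[OF sPst nPst ell_pos])
  have AED: "AE \<omega> in Pst. \<omega> \<in> D" using posS AE_mid AE_space unfolding D_def by eventually_elim auto
  have rr: "(\<integral>\<^sup>+\<omega>. ennreal (c \<omega> * Z \<omega>) \<partial>Pst) \<le> (\<integral>\<^sup>+\<omega>. ennreal (c \<omega> * Y \<omega>) \<partial>Pst)"
  proof (rule rearr[OF Pst_prob cS ci _ YS _ ZS _ _ AED])
    show "\<And>\<omega>. \<omega> \<in> space Pst \<Longrightarrow> 0 \<le> c \<omega>" using cnn by simp
    show "\<And>\<omega>. \<omega> \<in> space Pst \<Longrightarrow> 0 \<le> Y \<omega>" using Y_props(2) spPst by simp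
    show "\<And>\<omega>. \<omega> \<in> space Pst \<Longrightarrow> 0 \<le> Z \<omega>" using Znn by simp
    show "law_cdf Pst Y = law_cdf Pst Z" using Y_law Z_law by simp
    show "D \<subseteq> space Pst" unfolding D_def by auto
    fix s \<omega> \<omega>' assume \<omega>: "\<omega> \<in> D" and \<omega>': "\<omega>' \<in> D" and s1: "s < Z \<omega>" and s2: "\<not> s < Z \<omega>'"
    have Lle: "?L \<omega>' \<le> ?L \<omega>"
    proof (rule ccontr)
      assume "\<not> ?L \<omega>' \<le> ?L \<omega>"
      then have "h (?L \<omega>) \<le> h (?L \<omega>')" using \<omega> \<omega>' unfolding D_def by (intro h_mono) auto
      then have "Z \<omega> \<le> Z \<omega>'" using Zh \<omega> \<omega>' spPst unfolding D_def by auto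
      then show False using s1 s2 by simp
    qed
    then show "c \<omega> \<le> c \<omega>'" using \<omega>' unfolding c_def D_def by (auto intro!: divide_left_mono)
  qed
  have nnZ: "(\<integral>\<^sup>+\<omega>. ennreal (Z \<omega>) \<partial>Q) = (\<integral>\<^sup>+\<omega>. ennreal (c \<omega> * Z \<omega>) \<partial>Pst)"
    unfolding nn_Q_via_Pst[OF ZQ] c_def by simp
  have nnY: "(\<integral>\<^sup>+\<omega>. ennreal (Y \<omega>) \<partial>Q) = (\<integral>\<^sup>+\<omega>. ennreal (c \<omega> * Y \<omega>) \<partial>Pst)"
    unfolding nn_Q_via_Pst[OF Y_props(1)] c_def by simp
  have nnZY: "(\<integral>\<^sup>+\<omega>. ennreal (Z \<omega>) \<partial>Q) \<le> (\<integral>\<^sup>+\<omega>. ennreal (Y \<omega>) \<partial>Q)"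
    using rr nnZ nnY by simp
  have Yfin: "(\<integral>\<^sup>+\<omega>. ennreal (Y \<omega>) \<partial>Q) < \<infinity>"
  proof -
    have "(\<integral>\<^sup>+\<omega>. ennreal (Y \<omega>) \<partial>Q) = (\<integral>\<^sup>+\<omega>. ennreal (norm (Y \<omega>)) \<partial>Q)"
      by (rule nn_integral_cong) (use Y_props(2) in simp)
    also have "\<dots> < \<infinity>" using Y_props(3) unfolding integrable_iff_bounded by blast
    finally show ?thesis .
  qed
  have Zi: "integrable Q Z"
  proof (rule integrableI_nonneg)
    show "AE x in Q. 0 \<le> Z x" using Znn by simp
    show "(\<integral>\<^sup>+x. ennreal (Z x) \<partial>Q) < \<infinity>" using nnZY Yfin by (rule le_less_trans)
  qed (fact ZQ)
  have intZY: "(\<integral>\<omega>. Z \<omega> \<partial>Q) \<le> (\<integral>\<omega>. Y \<omega> \<partial>Q)"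
  proof -
    have "(\<integral>\<omega>. Z \<omega> \<partial>Q) = enn2real (\<integral>\<^sup>+\<omega>. ennreal (Z \<omega>) \<partial>Q)"
      by (rule integral_eq_nn_integral) (use Znn in auto)
    also have "\<dots> \<le> enn2real (\<integral>\<^sup>+\<omega>. ennreal (Y \<omega>) \<partial>Q)"
      using nnZY Yfin by (intro enn2real_mono) auto
    also have "\<dots> = (\<integral>\<omega>. Y \<omega> \<partial>Q)"
      by (rule integral_eq_nn_integral[symmetric]) (use Y_props in auto)
    finally show ?thesis .
  qed
  have Z_price: "price r T Q Z < price r T Q Xt"
  proof -
    have "exp (- r * T) * (\<integral>\<omega>. Z \<omega> \<partial>Q) \<le> exp (- r * T) * (\<integral>\<omega>. Y \<omega> \<partial>Q)"
      by (rule mult_left_mono[OF intZY]) simp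
    then show ?thesis using Y_price unfolding price_def by (rule le_less_trans)
  qed
  have Z_pay: "payoff Q S Z"
    unfolding payoff_def
  proof (intro conjI exI)
    show "h \<circ> \<phi> \<in> borel_measurable borel" using \<phi>m h_meas by measurable
    show "\<forall>x\<ge>0. 0 \<le> (h \<circ> \<phi>) x" using h_nonneg by simp
    show "Z = (\<lambda>\<omega>. (h \<circ> \<phi>) (S \<omega>))" unfolding Z_def by simp
  qed (fact Zi)
  have Zx0: "price r T Q Z \<le> x0" using Z_price Xt_price by simp
  have Z_in: "Z \<in> ?YY"
    unfolding family_budget_set_def budget_set_def
    using Z_pay Zx0 real_Reals by blast
  have aeS: "AE \<omega> in Pst. 0 < G (?L \<omega>) \<and> G (?L \<omega>) < 1 \<and> Z \<omega> = h (?L \<omega>)"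
    using AE_mid AE_space by eventually_elim (use Zh spPst in auto)
  have aeQ: "AE \<omega> in Q. 0 < G (?L \<omega>) \<and> G (?L \<omega>) < 1 \<and> Z \<omega> = h (?L \<omega>)"
    by (rule ae_transfer[OF sPst[symmetric] nPst[symmetric] aeS])
  have Gm: "mono G" by (auto simp: mono_def intro: law_cdf_mono[OF Pst_prob LS])
  have stoch: "\<forall>P\<in>Ps. stoch_le F_FSD (law_cdf Pst Z) (law_cdf P Z)"
  proof
    fix P assume P: "P \<in> Ps"
    have Pp: "prob_space P" and sP: "sets P = sets Q" and nP: "null_sets P = null_sets Q"
      using P Ps_prob Ps_equiv_Q by auto
    show "stoch_le F_FSD (law_cdf Pst Z) (law_cdf P Z)"
    proof (rule stoch_key[OF Pp Pst_prob _ _ LS ZS Gm h_nonneg h_mono aeS])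
      show "?L \<in> borel_measurable P" by (subst measurable_cong_sets[OF sP refl]) (rule LQ)
      show "Z \<in> borel_measurable P" by (subst measurable_cong_sets[OF sP refl]) (rule ZQ)
      show "AE \<omega> in P. 0 < G (?L \<omega>) \<and> G (?L \<omega>) < 1 \<and> Z \<omega> = h (?L \<omega>)"
        by (rule ae_transfer[OF sP nP aeQ])
      show "stoch_le F_FSD (law_cdf Pst ?L) (law_cdf P ?L)"
        using C3 P unfolding least_favorable_def by blast
    qed
  qed
  have WZ: "\<forall>P\<in>Ps. W Pst Z \<le> W P Z"
    using bspec[OF W_fam_cons[unfolded family_consistent_def] Z_in] stoch by (rule mp)
  have li: "\<And>X Y. payoff Q S X \<Longrightarrow> payoff Q S Y \<Longrightarrow> law_cdf Pst X = law_cdf Pst Y \<Longrightarrow> W Pst X = W Pst Y"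
    using bspec[OF W_law_inv[unfolded law_invariant_family_def] Pst_in] by blast
  have WZX: "W Pst Z = W Pst Xt" by (rule li[OF Z_pay Xt_pay Z_law])
  note us = unique_sol[unfolded unique_robust_solution_def]
  have us2: "\<forall>X\<in>?YY. robust_value Ps W X \<le> robust_value Ps W Xt" using us by (rule conjunct1[OF conjunct2])
  have us3: "\<forall>X\<in>?YY. robust_value Ps W X = robust_value Ps W Xt \<longrightarrow> (AE \<omega> in Q. X \<omega> = Xt \<omega>)"
    using us by (rule conjunct2[OF conjunct2])
  have "robust_value Ps W Xt \<le> ereal (W Pst Xt)"
    unfolding robust_value_def using Pst_in by (rule INF_lower)
  also have "\<dots> = ereal (W Pst Z)" using WZX by simp
  also have "\<dots> \<le> robust_value Ps W Z"
    unfolding robust_value_def using WZ by (auto intro!: INF_greatest)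
  finally have ge: "robust_value Ps W Xt \<le> robust_value Ps W Z" .
  have le: "robust_value Ps W Z \<le> robust_value Ps W Xt"
    using us2 Z_in by (rule bspec)
  have "robust_value Ps W Z = robust_value Ps W Xt" by (rule antisym[OF le ge])
  then have "AE \<omega> in Q. Z \<omega> = Xt \<omega>"
    using bspec[OF us3 Z_in] by (rule rev_mp)
  then have "(\<integral>\<omega>. Z \<omega> \<partial>Q) = (\<integral>\<omega>. Xt \<omega> \<partial>Q)" by (rule integral_cong_AE[OF ZQ Xt_props(1)])
  then have "price r T Q Z = price r T Q Xt" unfolding price_def by simp
  then show False using Z_price by simp
qed


end
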